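(* Let $V$ be a real vector space of dimension $2n$ with basis $e_1,\dots,e_{2n}$ and symplectic form $\omega=e_{12}+e_{34}+\dots+e_{2n-1,2n}$ (where $e_{ij}=e_i\wedge e_j$). Then every primitive element $\mu_k\in P\bigwedge^kV$ can be written as $$\mu_k=e_1\wedge\beta_1+e_2\wedge\beta_2+\Big(e_{12}-\tfrac{1}{n-k+1}\sum_{j=2}^n e_{2j-1,2j}\Big)\wedge\beta_3+\beta_4,$$ where $\beta_1,\beta_2\in P\bigwedge^{k-1}V$, $\beta_3\in P\bigwedge^{k-2}V$, $\beta_4\in P\bigwedge^kV$, and none of $\beta_1,\dots,\beta_4$ involves $e_1$ or $e_2$ (i.e. they lie in the exterior algebra of $\mathrm{span}\{e_3,\dots,e_{2n}\}$).
   Context: On $\bigwedge^\bullet V$, $L(\alpha)=\omega\wedge\alpha$, $\Lambda$ is contraction with the bivector $\omega^{-1}$ (adjoint-type operator with $[\Lambda,L]=H$), and $H$ acts on $\bigwedge^kV$ as multiplication by $n-k$. An element $\mu\in\bigwedge^kV$ ($k\le n$) is primitive if $\Lambda\mu=0$; $P\bigwedge^kV$ is the space of primitive elements. The coefficient $\frac{1}{n-k+1}$ is what the paper writes as the operator $\frac{1}{H+1}$ applied to the resulting degree-$k$ element. *)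

theory Defs
  imports Complex_Main
begin

text \<open>A multivector is a coefficient function on finite index sets: alpha S is the
  coefficient of e_S = e_(s1) wedge ... wedge e_(sm) for S = {s1 < ... < sm}.\<close>

type_synonym mvec = "nat set \<Rightarrow> real"

definition ebasis :: "nat set \<Rightarrow> mvec" where
  "ebasis S = (\<lambda>T. if T = S then 1 else 0)"

definition mv_add :: "mvec \<Rightarrow> mvec \<Rightarrow> mvec" where
  "mv_add a b = (\<lambda>S. a S + b S)"

definition mv_scale :: "real \<Rightarrow> mvec \<Rightarrow> mvec" where
  "mv_scale c a = (\<lambda>S. c * a S)"

text \<open>Wedge product: e_S wedge e_T = (-1)^(number of pairs s in S, t in T, t < s) e_(S union T)
  when S, T are disjoint, and 0 otherwise.\<close>
definition wedge :: "mvec \<Rightarrow> mvec \<Rightarrow> mvec" where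
  "wedge a b = (\<lambda>U. \<Sum>S\<in>Pow U.
      (-1) ^ card {(s, t). s \<in> S \<and> t \<in> U - S \<and> t < s} * a S * b (U - S))"

text \<open>Homogeneous element of degree d of the exterior algebra of V = span{e_1..e_2n}.
  The degree is an integer so that negative degrees force the element to be 0.\<close>
definition homog :: "nat \<Rightarrow> int \<Rightarrow> mvec \<Rightarrow> bool" where
  "homog n d a \<longleftrightarrow> (\<forall>S. a S \<noteq> 0 \<longrightarrow> S \<subseteq> {1..2*n} \<and> int (card S) = d)"

text \<open>Interior product with the dual basis covector e^j:
  iota_j (e_j wedge e_S) = e_S for j not in S.\<close>
definition iota :: "nat \<Rightarrow> mvec \<Rightarrow> mvec" where
  "iota j a = (\<lambda>S. if j \<in> S then 0
                   else (-1) ^ card {s \<in> S. s < j} * a (insert j S))"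

text \<open>omega = e_12 + e_34 + ... + e_(2n-1,2n), L = omega wedge _,
  Lambda = contraction with the bivector omega^(-1); [Lambda, L] = H.\<close>
definition omega :: "nat \<Rightarrow> mvec" where
  "omega n = (\<lambda>S. \<Sum>i\<in>{1..n}. ebasis {2*i - 1, 2*i} S)"

definition Lam :: "nat \<Rightarrow> mvec \<Rightarrow> mvec" where
  "Lam n a = (\<lambda>S. \<Sum>i\<in>{1..n}. iota (2*i) (iota (2*i - 1) a) S)"

definition primitive :: "nat \<Rightarrow> int \<Rightarrow> mvec \<Rightarrow> bool" where
  "primitive n d a \<longleftrightarrow> homog n d a \<and> Lam n a = (\<lambda>_. 0)"

definition avoids12 :: "mvec \<Rightarrow> bool" where
  "avoids12 a \<longleftrightarrow> (\<forall>S. a S \<noteq> 0 \<longrightarrow> 1 \<notin> S \<and> 2 \<notin> S)"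

end

theory Submission
  imports Defs
begin

definition pp :: "nat \<Rightarrow> nat set" where "pp i = {2*i - 1, 2*i}"

lemma wedge_ebasis:
  "wedge (ebasis P) c U = (if finite U \<and> P \<subseteq> U then (-1) ^ card {(s,t). s \<in> P \<and> t \<in> U - P \<and> t < s} * c (U - P) else 0)"
proof (cases "finite U")
  case True
  have "wedge (ebasis P) c U = (\<Sum>S\<in>Pow U. if S = P then (-1) ^ card {(s,t). s \<in> P \<and> t \<in> U - P \<and> t < s} * c (U - P) else 0)"
    unfolding wedge_def ebasis_def by (rule sum.cong) auto
  also have "\<dots> = (if P \<in> Pow U then (-1) ^ card {(s,t). s \<in> P \<and> t \<in> U - P \<and> t < s} * c (U - P) else 0)"
    using True by (simp add: sum.delta')
  finally show ?thesis using True by auto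
next
  case False
  then show ?thesis by (simp add: wedge_def)
qed

lemma wedge_add1: "wedge (mv_add x y) c = mv_add (wedge x c) (wedge y c)"
  by (simp add: wedge_def mv_add_def algebra_simps sum.distrib fun_eq_iff)

lemma wedge_scale1: "wedge (mv_scale r x) c = mv_scale r (wedge x c)"
  by (simp add: wedge_def mv_scale_def sum_distrib_left fun_eq_iff algebra_simps)

lemma wedge_sum1: "wedge (\<lambda>S. \<Sum>j\<in>J. f j S) c = (\<lambda>U. \<Sum>j\<in>J. wedge (f j) c U)"
  unfolding wedge_def
  by (simp add: fun_eq_iff sum_distrib_left sum_distrib_right algebra_simps sum.swap[of _ J])

lemma pp_sign: assumes "1 \<le> j"
  shows "(-1::real) ^ card {(s,t). s \<in> pp j \<and> t \<in> U - pp j \<and> t < s} = 1"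
proof -
  have "{(s,t). s \<in> pp j \<and> t \<in> U - pp j \<and> t < s} = pp j \<times> {t \<in> U - pp j. t < 2*j - 1}"
    using assms by (auto simp: pp_def)
  moreover have "card (pp j) = 2" using assms by (simp add: pp_def)
  ultimately show ?thesis by (simp add: card_cartesian_product)
qed

lemma lt_lemma: "1 \<le> (i::nat) \<Longrightarrow> 2*i - 1 \<notin> S \<Longrightarrow> {s \<in> S. s < 2*i} = {s \<in> S. s < 2*i - 1}"
proof (rule Collect_cong)
  fix s assume "1 \<le> i" "2*i - 1 \<notin> S" 
  then show "(s \<in> S \<and> s < 2*i) = (s \<in> S \<and> s < 2*i - 1)"
    by (cases "s = 2*i - 1") auto
qed

lemma Lam_eq: "Lam n a S = (\<Sum>i\<in>{1..n}. if 2*i - 1 \<notin> S \<and> 2*i \<notin> S then a (S \<union> pp i) else 0)"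
  unfolding Lam_def
proof (rule sum.cong)
  fix i assume i: "i \<in> {1..n}"
  show "iota (2*i) (iota (2*i - 1) a) S = (if 2*i - 1 \<notin> S \<and> 2*i \<notin> S then a (S \<union> pp i) else 0)"
  proof (cases "2*i - 1 \<notin> S \<and> 2*i \<notin> S")
    case True
    have e1: "{s \<in> insert (2*i) S. s < 2*i - 1} = {s \<in> S. s < 2*i - 1}" using i by auto
    have e2: "{s \<in> S. s < 2*i} = {s \<in> S. s < 2*i - 1}" using i True by (intro lt_lemma) auto
    have e3: "insert (2*i - 1) (insert (2*i) S) = S \<union> pp i" by (auto simp: pp_def)
    have "(-1::real) ^ card {s \<in> S. s < 2*i - 1} * (-1) ^ card {s \<in> S. s < 2*i - 1} = 1"
      by (simp add: power_add[symmetric])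
    then show ?thesis using True i unfolding iota_def e1 e2 e3 by auto
  next
    case False
    then show ?thesis using i by (auto simp: iota_def)
  qed
qed simp


lemma pp_disj: "1 \<le> i \<Longrightarrow> 1 \<le> j \<Longrightarrow> i \<noteq> j \<Longrightarrow> pp i \<inter> pp j = {}"
  by (auto simp: pp_def)

lemma pp_ne: "pp i \<noteq> {}" by (simp add: pp_def)

lemma homog_fin: "homog n d a \<Longrightarrow> a U \<noteq> 0 \<Longrightarrow> finite U \<and> U \<subseteq> {1..2*n} \<and> int (card U) = d"
  unfolding homog_def by (meson finite_atLeastAtMost finite_subset)

lemma Lam_restrict:
  assumes "avoids12 x"
  shows "Lam n x S = (\<Sum>i\<in>{2..n}. if pp i \<inter> S = {} then x (S \<union> pp i) else 0)"
proof (cases "n = 0")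
  case True then show ?thesis by (simp add: Lam_eq)
next
  case False
  then have e: "{1..n} = insert 1 {2..n}" by auto
  have z: "x (S \<union> pp (Suc 0)) = 0" using assms unfolding avoids12_def pp_def by auto
  have c: "\<And>i. (2*i - 1 \<notin> S \<and> 2*i \<notin> S) = (pp i \<inter> S = {})" by (auto simp: pp_def)
  have "Lam n x S = (\<Sum>i\<in>{1..n}. if pp i \<inter> S = {} then x (S \<union> pp i) else 0)"
    unfolding Lam_eq c ..
  also have "\<dots> = (\<Sum>i\<in>{2..n}. if pp i \<inter> S = {} then x (S \<union> pp i) else 0)" unfolding e by (simp add: z)
  finally show ?thesis .
qed

lemma card_pp_int: assumes "1 \<le> i"
  shows "real (card (S \<inter> pp i)) = 1 - (if pp i \<inter> S = {} then 1 else 0) + (if pp i \<subseteq> S then 1 else 0)"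
proof -
  have ne: "2*i - 1 \<noteq> 2*i" using assms by auto
  show ?thesis
  proof (cases "2*i - 1 \<in> S"; cases "2*i \<in> S")
    assume "2*i - 1 \<in> S" "2*i \<in> S"
    then have "S \<inter> pp i = pp i" by (auto simp: pp_def)
    moreover have "pp i \<subseteq> S" using \<open>2*i - 1 \<in> S\<close> \<open>2*i \<in> S\<close> by (auto simp: pp_def)
    ultimately show ?thesis using ne by (simp add: pp_def)
  next
    assume "2*i - 1 \<in> S" "2*i \<notin> S"
    then have "S \<inter> pp i = {2*i - 1}" by (auto simp: pp_def)
    then show ?thesis using ne \<open>2*i \<notin> S\<close> by (auto simp: pp_def)
  next
    assume "2*i - 1 \<notin> S" "2*i \<in> S"
    then have "S \<inter> pp i = {2*i}" by (auto simp: pp_def)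
    then show ?thesis using ne \<open>2*i - 1 \<notin> S\<close> by (auto simp: pp_def)
  next
    assume "2*i - 1 \<notin> S" "2*i \<notin> S"
    then have "S \<inter> pp i = {}" by (auto simp: pp_def)
    then show ?thesis using ne by (auto simp: pp_def)
  qed
qed
lemma count_lemma:
  assumes "S \<subseteq> {1..2*n}" "1 \<notin> S" "2 \<notin> S" "1 \<le> n"
  shows "(\<Sum>i\<in>{2..n}. if pp i \<inter> S = {} then 1 else 0) - (\<Sum>j\<in>{2..n}. if pp j \<subseteq> S then 1 else 0)
         = real n - 1 - real (card S)"
proof -
  have U: "S = (\<Union>i\<in>{2..n}. S \<inter> pp i)"
  proof
    show "S \<subseteq> (\<Union>i\<in>{2..n}. S \<inter> pp i)"
    proof
      fix x assume x: "x \<in> S"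
      have "x \<in> {1..2*n}" "x \<noteq> 1" "x \<noteq> 2" using assms x by auto
      then have "3 \<le> x" "x \<le> 2*n" by auto
      then have "(x+1) div 2 \<in> {2..n}" "x \<in> pp ((x+1) div 2)" by (auto simp: pp_def)
      then show "x \<in> (\<Union>i\<in>{2..n}. S \<inter> pp i)" using x by blast
    qed
  qed auto
  have "card S = (\<Sum>i\<in>{2..n}. card (S \<inter> pp i))"
    by (subst U, rule card_UN_disjoint) (auto simp: pp_def)
  then have "real (card S) = (\<Sum>i\<in>{2..n}. real (card (S \<inter> pp i)))" by simp
  also have "\<dots> = (\<Sum>i\<in>{2..n}. 1 - (if pp i \<inter> S = {} then 1 else 0) + (if pp i \<subseteq> S then 1 else 0))"
  proof (rule sum.cong)
    fix i assume i: "i \<in> {2..n}"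
    show "real (card (S \<inter> pp i)) = 1 - (if pp i \<inter> S = {} then 1 else 0) + (if pp i \<subseteq> S then 1 else 0)"
      using i by (intro card_pp_int) auto
  qed simp
  also have "\<dots> = real n - 1 - ((\<Sum>i\<in>{2..n}. if pp i \<inter> S = {} then 1 else 0) - (\<Sum>j\<in>{2..n}. if pp j \<subseteq> S then 1 else 0))"
    using assms(4) by (simp add: sum.distrib sum_subtractf of_nat_diff)
  finally show ?thesis by linarith
qed


lemma sum_nz: "(\<Sum>j\<in>J. f j) \<noteq> (0::real) \<Longrightarrow> \<exists>j\<in>J. f j \<noteq> 0"
  by (metis sum.neutral)

lemma key_lemma:
  assumes h: "homog n d c" and av: "avoids12 c" and pr: "Lam n c = (\<lambda>_. 0)"
  defines "L \<equiv> \<lambda>U. \<Sum>j\<in>{2..n}. if pp j \<subseteq> U then c (U - pp j) else 0"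
  shows "Lam n L S = ((\<Sum>i\<in>{2..n}. if pp i \<inter> S = {} then 1 else 0)
                       - (\<Sum>j\<in>{2..n}. if pp j \<subseteq> S then 1 else 0)) * c S"
proof -
  let ?I = "{2..n}"
  have Lav: "avoids12 L"
    unfolding avoids12_def
  proof (intro allI impI)
    fix U assume "L U \<noteq> 0"
    then obtain j where j: "j \<in> ?I" "pp j \<subseteq> U" "c (U - pp j) \<noteq> 0"
      unfolding L_def by (auto dest!: sum_nz split: if_splits)
    then have "1 \<notin> U - pp j" "2 \<notin> U - pp j" using av unfolding avoids12_def by auto
    moreover have "1 \<notin> pp j" "2 \<notin> pp j" using j(1) by (auto simp: pp_def)
    ultimately show "1 \<notin> U \<and> 2 \<notin> U" by auto
  qed
  have step1: "L (S \<union> pp i) = c S + (\<Sum>j\<in>?I. if pp j \<subseteq> S then c ((S - pp j) \<union> pp i) else 0)"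
    if i: "i \<in> ?I" "pp i \<inter> S = {}" for i
  proof -
    have "L (S \<union> pp i) = (\<Sum>j\<in>?I. (if j = i then c S else 0) + (if pp j \<subseteq> S then c ((S - pp j) \<union> pp i) else 0))"
      unfolding L_def
    proof (rule sum.cong)
      fix j assume j: "j \<in> ?I"
      show "(if pp j \<subseteq> S \<union> pp i then c (S \<union> pp i - pp j) else 0) =
            (if j = i then c S else 0) + (if pp j \<subseteq> S then c ((S - pp j) \<union> pp i) else 0)"
      proof (cases "j = i")
        case True
        have "S \<union> pp i - pp i = S" using i by auto
        moreover have "\<not> pp i \<subseteq> S" using i pp_ne by blast
        ultimately show ?thesis using True by auto
      next
        case False
        have d: "pp j \<inter> pp i = {}" using False i j by (intro pp_disj) auto
        then have "(pp j \<subseteq> S \<union> pp i) = (pp j \<subseteq> S)" by blast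
        moreover have "S \<union> pp i - pp j = (S - pp j) \<union> pp i" using d by blast
        ultimately show ?thesis using False by auto
      qed
    qed simp
    also have "\<dots> = c S + (\<Sum>j\<in>?I. if pp j \<subseteq> S then c ((S - pp j) \<union> pp i) else 0)"
      using i by (simp add: sum.distrib)
    finally show ?thesis .
  qed
  have step2: "(\<Sum>i\<in>?I. if pp i \<inter> S = {} then c ((S - pp j) \<union> pp i) else 0) = - c S"
    if j: "j \<in> ?I" "pp j \<subseteq> S" for j
  proof -
    have "0 = Lam n c (S - pp j)" using pr by simp
    also have "\<dots> = (\<Sum>i\<in>?I. if pp i \<inter> (S - pp j) = {} then c ((S - pp j) \<union> pp i) else 0)"
      by (rule Lam_restrict[OF av])
    also have "\<dots> = (\<Sum>i\<in>?I. (if i = j then c S else 0) + (if pp i \<inter> S = {} then c ((S - pp j) \<union> pp i) else 0))"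
    proof (rule sum.cong)
      fix i assume i: "i \<in> ?I"
      show "(if pp i \<inter> (S - pp j) = {} then c ((S - pp j) \<union> pp i) else 0) =
            (if i = j then c S else 0) + (if pp i \<inter> S = {} then c ((S - pp j) \<union> pp i) else 0)"
      proof (cases "i = j")
        case True
        have "(S - pp j) \<union> pp j = S" using j by auto
        moreover have "pp j \<inter> S \<noteq> {}" using j pp_ne by blast
        ultimately show ?thesis using True by auto
      next
        case False
        have d: "pp i \<inter> pp j = {}" using False i j by (intro pp_disj) auto
        then have "(pp i \<inter> (S - pp j) = {}) = (pp i \<inter> S = {})" by blast
        then show ?thesis using False by auto
      qed
    qed simp
    also have "\<dots> = c S + (\<Sum>i\<in>?I. if pp i \<inter> S = {} then c ((S - pp j) \<union> pp i) else 0)"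
      using j by (simp add: sum.distrib)
    finally show ?thesis by linarith
  qed
  have "Lam n L S = (\<Sum>i\<in>?I. if pp i \<inter> S = {} then L (S \<union> pp i) else 0)"
    by (rule Lam_restrict[OF Lav])
  also have "\<dots> = (\<Sum>i\<in>?I. (if pp i \<inter> S = {} then 1 else 0) * c S
      + (\<Sum>j\<in>?I. if pp j \<subseteq> S then (if pp i \<inter> S = {} then c ((S - pp j) \<union> pp i) else 0) else 0))"
  proof (rule sum.cong)
    fix i assume i: "i \<in> ?I"
    show "(if pp i \<inter> S = {} then L (S \<union> pp i) else 0) = (if pp i \<inter> S = {} then 1 else 0) * c S
      + (\<Sum>j\<in>?I. if pp j \<subseteq> S then (if pp i \<inter> S = {} then c ((S - pp j) \<union> pp i) else 0) else 0)"
    proof (cases "pp i \<inter> S = {}")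
      case True
      then have T: "(pp i \<inter> S = {}) = True" by simp
      show ?thesis unfolding T if_True step1[OF i True] by simp
    next
      case False
      then have F: "(pp i \<inter> S = {}) = False" by simp
      show ?thesis unfolding F if_False if_cancel by simp
    qed
  qed simp
  also have "\<dots> = (\<Sum>i\<in>?I. if pp i \<inter> S = {} then 1 else 0) * c S
      + (\<Sum>j\<in>?I. if pp j \<subseteq> S then (\<Sum>i\<in>?I. if pp i \<inter> S = {} then c ((S - pp j) \<union> pp i) else 0) else 0)"
  proof -
    have sw: "(\<Sum>i\<in>?I. \<Sum>j\<in>?I. if pp j \<subseteq> S then (if pp i \<inter> S = {} then c ((S - pp j) \<union> pp i) else 0) else 0)
       = (\<Sum>j\<in>?I. \<Sum>i\<in>?I. if pp j \<subseteq> S then (if pp i \<inter> S = {} then c ((S - pp j) \<union> pp i) else 0) else 0)"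
      by (rule sum.swap)
    have ifs: "\<And>j. (\<Sum>i\<in>?I. if pp j \<subseteq> S then (if pp i \<inter> S = {} then c ((S - pp j) \<union> pp i) else 0) else 0)
       = (if pp j \<subseteq> S then (\<Sum>i\<in>?I. if pp i \<inter> S = {} then c ((S - pp j) \<union> pp i) else 0) else 0)"
      by simp
    show ?thesis unfolding sum.distrib sum_distrib_right[symmetric] sw ifs ..
  qed
  also have "\<dots> = (\<Sum>i\<in>?I. if pp i \<inter> S = {} then 1 else 0) * c S
      + (\<Sum>j\<in>?I. if pp j \<subseteq> S then - c S else 0)"
    by (auto simp: step2 intro!: sum.cong)
  also have "(\<Sum>j\<in>?I. if pp j \<subseteq> S then - c S else 0) = (\<Sum>j\<in>?I. (if pp j \<subseteq> S then 1 else 0) * (- c S))"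
    by (rule sum.cong) auto
  also have "\<dots> = (\<Sum>j\<in>?I. if pp j \<subseteq> S then 1 else 0) * (- c S)"
    by (rule sum_distrib_right[symmetric])
  also have "(\<Sum>i\<in>?I. if pp i \<inter> S = {} then 1 else 0) * c S + (\<Sum>j\<in>?I. if pp j \<subseteq> S then 1 else 0) * (- c S)
     = ((\<Sum>i\<in>{2..n}. if pp i \<inter> S = {} then 1 else 0) - (\<Sum>j\<in>{2..n}. if pp j \<subseteq> S then 1 else 0)) * c S"
    by (simp add: algebra_simps)
  finally show ?thesis .
qed


definition Lop :: "nat \<Rightarrow> mvec \<Rightarrow> mvec" where
  "Lop n c = (\<lambda>U. \<Sum>j\<in>{2..n}. if pp j \<subseteq> U then c (U - pp j) else 0)"

definition restr :: "mvec \<Rightarrow> nat set \<Rightarrow> mvec" where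
  "restr \<mu> T = (\<lambda>S. if 1 \<in> S \<or> 2 \<in> S then 0 else \<mu> (T \<union> S))"

lemma Lc_eq: assumes "homog n d c"
  shows "wedge (\<lambda>S. \<Sum>j\<in>{2..n}. ebasis {2*j - 1, 2*j} S) c = Lop n c"
proof -
  have "(\<lambda>S. \<Sum>j\<in>{2..n}. ebasis {2*j - 1, 2*j} S) = (\<lambda>S. \<Sum>j\<in>{2..n}. ebasis (pp j) S)"
    by (simp add: pp_def)
  then have "wedge (\<lambda>S. \<Sum>j\<in>{2..n}. ebasis {2*j - 1, 2*j} S) c = (\<lambda>U. \<Sum>j\<in>{2..n}. wedge (ebasis (pp j)) c U)"
    by (simp add: wedge_sum1)
  also have "\<dots> = Lop n c"
    unfolding Lop_def
  proof (rule ext, rule sum.cong)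
    fix U j assume j: "j \<in> {2..n}"
    show "wedge (ebasis (pp j)) c U = (if pp j \<subseteq> U then c (U - pp j) else 0)"
    proof (cases "finite U")
      case True
      have j1: "1 \<le> j" using j by auto
      show ?thesis using True by (simp only: wedge_ebasis pp_sign[OF j1]) simp
    next
      case False
      then have "\<not> finite (U - pp j)" by (simp add: pp_def)
      then have "c (U - pp j) = 0" using homog_fin[OF assms] by blast
      then show ?thesis using False by (simp add: wedge_ebasis)
    qed
  qed simp
  finally show ?thesis .
qed

lemma Lop_avoids: assumes "avoids12 c" shows "avoids12 (Lop n c)"
  unfolding avoids12_def
proof (intro allI impI)
  fix U assume "Lop n c U \<noteq> 0"
  then obtain j where j: "j \<in> {2..n}" "pp j \<subseteq> U" "c (U - pp j) \<noteq> 0"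
    unfolding Lop_def by (auto dest!: sum_nz split: if_splits)
  then have "1 \<notin> U - pp j" "2 \<notin> U - pp j" using assms unfolding avoids12_def by auto
  moreover have "1 \<notin> pp j" "2 \<notin> pp j" using j(1) by (auto simp: pp_def)
  ultimately show "1 \<notin> U \<and> 2 \<notin> U" by auto
qed

lemma Lop_homog: assumes "homog n d c" shows "homog n (d + 2) (Lop n c)"
  unfolding homog_def
proof (intro allI impI)
  fix U assume "Lop n c U \<noteq> 0"
  then obtain j where j: "j \<in> {2..n}" "pp j \<subseteq> U" "c (U - pp j) \<noteq> 0"
    unfolding Lop_def by (auto dest!: sum_nz split: if_splits)
  from homog_fin[OF assms j(3)] have f: "finite (U - pp j)" "U - pp j \<subseteq> {1..2*n}" "int (card (U - pp j)) = d" by auto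
  have pj: "pp j \<subseteq> {1..2*n}" "card (pp j) = 2" "finite (pp j)" using j(1) by (auto simp: pp_def)
  have "U = (U - pp j) \<union> pp j" using j(2) by auto
  then have "card U = card (U - pp j) + card (pp j)"
    using f pj by (metis Diff_disjoint card_Un_disjoint inf_commute)
  then show "U \<subseteq> {1..2*n} \<and> int (card U) = d + 2" using f pj j(2) by auto
qed

lemma Lam_add: "Lam n (mv_add x y) = mv_add (Lam n x) (Lam n y)"
  by (simp add: fun_eq_iff Lam_eq mv_add_def sum.distrib[symmetric] if_distrib cong: if_cong)

lemma Lam_scale: "Lam n (mv_scale r x) = mv_scale r (Lam n x)"
  by (simp add: fun_eq_iff Lam_eq mv_scale_def sum_distrib_left if_distrib cong: if_cong)

lemma restr_avoids: "avoids12 (restr \<mu> T)"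
  by (simp add: avoids12_def restr_def)

lemma restr_homog: assumes "homog n k \<mu>" "T \<subseteq> {1,2}"
  shows "homog n (k - int (card T)) (restr \<mu> T)"
  unfolding homog_def
proof (intro allI impI)
  fix S assume "restr \<mu> T S \<noteq> 0"
  then have n: "\<mu> (T \<union> S) \<noteq> 0" "1 \<notin> S" "2 \<notin> S" by (auto simp: restr_def split: if_splits)
  from homog_fin[OF assms(1) n(1)] have f: "finite (T \<union> S)" "T \<union> S \<subseteq> {1..2*n}" "int (card (T \<union> S)) = k" by auto
  have "T \<inter> S = {}" using n assms(2) by auto
  then have "card (T \<union> S) = card T + card S" using f by (simp add: card_Un_disjoint)
  then show "S \<subseteq> {1..2*n} \<and> int (card S) = k - int (card T)" using f by auto
qed

lemma Lam_mu_split: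
  assumes "1 \<le> n" "T \<subseteq> {1,2}" "1 \<notin> S" "2 \<notin> S"
  shows "Lam n \<mu> (T \<union> S) = (if T = {} then \<mu> (S \<union> pp 1) else 0)
     + (\<Sum>i\<in>{2..n}. if pp i \<inter> S = {} then \<mu> (T \<union> (S \<union> pp i)) else 0)"
proof -
  have e: "{1..n} = insert 1 {2..n}" using assms by auto
  have t1: "(if 2*1 - 1 \<notin> T \<union> S \<and> 2*1 \<notin> T \<union> S then \<mu> (T \<union> S \<union> pp 1) else 0)
      = (if T = {} then \<mu> (S \<union> pp 1) else 0)"
    using assms by auto
  have t2: "(\<Sum>i\<in>{2..n}. if 2*i - 1 \<notin> T \<union> S \<and> 2*i \<notin> T \<union> S then \<mu> (T \<union> S \<union> pp i) else 0)
     = (\<Sum>i\<in>{2..n}. if pp i \<inter> S = {} then \<mu> (T \<union> (S \<union> pp i)) else 0)"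
  proof (rule sum.cong)
    fix i assume i: "i \<in> {2..n}"
    have "(2*i - 1 \<notin> T \<union> S \<and> 2*i \<notin> T \<union> S) = (pp i \<inter> S = {})"
      using i assms by (auto simp: pp_def)
    moreover have "T \<union> S \<union> pp i = T \<union> (S \<union> pp i)" by auto
    ultimately show "(if 2*i - 1 \<notin> T \<union> S \<and> 2*i \<notin> T \<union> S then \<mu> (T \<union> S \<union> pp i) else 0)
     = (if pp i \<inter> S = {} then \<mu> (T \<union> (S \<union> pp i)) else 0)" by simp
  qed simp
  show ?thesis unfolding Lam_eq e
    by (subst sum.insert) (use t1 t2 in auto)
qed

lemma restr_Lam:
  assumes "1 \<le> n" "T \<subseteq> {1,2}" "Lam n \<mu> = (\<lambda>_. 0)"
  shows "Lam n (restr \<mu> T) S = (if T = {} then - restr \<mu> {1,2} S else 0)"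
proof (cases "1 \<in> S \<or> 2 \<in> S")
  case True
  have "Lam n (restr \<mu> T) S = (\<Sum>i\<in>{2..n}. if pp i \<inter> S = {} then restr \<mu> T (S \<union> pp i) else 0)"
    by (rule Lam_restrict[OF restr_avoids])
  also have "\<dots> = 0" using True by (auto simp: restr_def intro!: sum.neutral)
  finally show ?thesis using True by (simp add: restr_def)
next
  case False
  have "Lam n (restr \<mu> T) S = (\<Sum>i\<in>{2..n}. if pp i \<inter> S = {} then restr \<mu> T (S \<union> pp i) else 0)"
    by (rule Lam_restrict[OF restr_avoids])
  also have "\<dots> = (\<Sum>i\<in>{2..n}. if pp i \<inter> S = {} then \<mu> (T \<union> (S \<union> pp i)) else 0)"
  proof (rule sum.cong)
    fix i assume i: "i \<in> {2..n}"
    have "1 \<notin> S \<union> pp i" "2 \<notin> S \<union> pp i" using i False by (auto simp: pp_def)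
    then show "(if pp i \<inter> S = {} then restr \<mu> T (S \<union> pp i) else 0) =
      (if pp i \<inter> S = {} then \<mu> (T \<union> (S \<union> pp i)) else 0)" by (simp add: restr_def)
  qed simp
  also have "\<dots> = Lam n \<mu> (T \<union> S) - (if T = {} then \<mu> (S \<union> pp 1) else 0)"
    using Lam_mu_split[OF assms(1,2)] False by simp
  also have "\<dots> = (if T = {} then - restr \<mu> {1,2} S else 0)"
    using assms(3) False by (simp add: restr_def pp_def Un_commute)
  finally show ?thesis .
qed


lemma term_eq: assumes "homog n k \<mu>" "T \<subseteq> {1,2}"
  shows "wedge (ebasis T) (restr \<mu> T) U = (if T \<subseteq> U \<and> (1 \<in> U \<longleftrightarrow> 1 \<in> T) \<and> (2 \<in> U \<longleftrightarrow> 2 \<in> T) then \<mu> U else 0)"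
proof -
  have r: "restr \<mu> T (U - T) = (if (1 \<in> U \<longleftrightarrow> 1 \<in> T) \<and> (2 \<in> U \<longleftrightarrow> 2 \<in> T) then \<mu> U else 0)" if "T \<subseteq> U"
  proof -
    have "T \<union> (U - T) = U" using that by auto
    moreover have "(1 \<in> U - T \<or> 2 \<in> U - T) = (\<not> ((1 \<in> U \<longleftrightarrow> 1 \<in> T) \<and> (2 \<in> U \<longleftrightarrow> 2 \<in> T)))" using that by auto
    ultimately show ?thesis unfolding restr_def by simp
  qed
  show ?thesis
  proof (cases "\<mu> U = 0")
    case True
    then show ?thesis by (auto simp: wedge_ebasis r)
  next
    case False
    from homog_fin[OF assms(1) False] have f: "finite U" "U \<subseteq> {1..2*n}" by auto
    show ?thesis
    proof (cases "T \<subseteq> U \<and> (1 \<in> U \<longleftrightarrow> 1 \<in> T) \<and> (2 \<in> U \<longleftrightarrow> 2 \<in> T)")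
      case True
      have E: "{(s,t). s \<in> T \<and> t \<in> U - T \<and> t < s} = {}"
      proof (rule ccontr)
        assume "{(s,t). s \<in> T \<and> t \<in> U - T \<and> t < s} \<noteq> {}"
        then obtain s t where st: "s \<in> T" "t \<in> U" "t \<notin> T" "t < s" by auto
        have "s \<le> 2" using st(1) assms(2) by auto
        moreover have "1 \<le> t" using st(2) f(2) by auto
        ultimately have "t = 1" using st(4) by auto
        then show False using st True by auto
      qed
      show ?thesis unfolding wedge_ebasis E using True f r by simp
    next
      case False
      then show ?thesis using r by (auto simp: wedge_ebasis)
    qed
  qed
qed

theorem lemma2p3:
  fixes n k :: nat and \<mu> :: mvec
  assumes "1 \<le> n" and "k \<le> n"
    and "primitive n (int k) \<mu>"
  shows "\<exists>\<beta>1 \<beta>2 \<beta>3 \<beta>4.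
           primitive n (int k - 1) \<beta>1 \<and> primitive n (int k - 1) \<beta>2 \<and>
           primitive n (int k - 2) \<beta>3 \<and> primitive n (int k) \<beta>4 \<and>
           avoids12 \<beta>1 \<and> avoids12 \<beta>2 \<and> avoids12 \<beta>3 \<and> avoids12 \<beta>4 \<and>
           \<mu> = mv_add (wedge (ebasis {1}) \<beta>1)
                 (mv_add (wedge (ebasis {2}) \<beta>2)
                   (mv_add (wedge (mv_add (ebasis {1, 2})
                                     (mv_scale (- 1 / (real n - real k + 1))
                                        (\<lambda>S. \<Sum>j\<in>{2..n}. ebasis {2*j - 1, 2*j} S)))
                                  \<beta>3)
                     \<beta>4))"
proof -
  have h: "homog n (int k) \<mu>" and pr: "Lam n \<mu> = (\<lambda>_. 0)" using assms(3) by (auto simp: primitive_def)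
  define s where "s = - 1 / (real n - real k + 1)"
  define Om where "Om = (\<lambda>S. \<Sum>j\<in>{2..n}. ebasis {2*j - 1, 2*j} S)"
  define c where "c = restr \<mu> {1,2}"
  define \<beta>4 where "\<beta>4 = mv_add (restr \<mu> {}) (mv_scale (- s) (Lop n c))"
  have hc: "homog n (int k - 2) c" using restr_homog[OF h, of "{1,2}"] by (simp add: c_def)
  have h1: "homog n (int k - 1) (restr \<mu> {1})" using restr_homog[OF h, of "{1}"] by simp
  have h2: "homog n (int k - 1) (restr \<mu> {2})" using restr_homog[OF h, of "{2}"] by simp
  have h0: "homog n (int k) (restr \<mu> {})" using restr_homog[OF h, of "{}"] by simp
  have avc: "avoids12 c" by (simp add: c_def restr_avoids)
  have Lc: "Lam n c = (\<lambda>_. 0)" using restr_Lam[OF assms(1) _ pr, of "{1,2}"] by (simp add: c_def fun_eq_iff)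
  have wOm: "wedge Om c = Lop n c" unfolding Om_def by (rule Lc_eq[OF hc])
  have LLc: "Lam n (Lop n c) S = (real n - real k + 1) * c S" for S
  proof (cases "c S = 0")
    case True
    then show ?thesis using key_lemma[OF hc avc Lc, of S] by (simp add: Lop_def)
  next
    case False
    from homog_fin[OF hc False] have f: "S \<subseteq> {1..2*n}" "int (card S) = int k - 2" by auto
    have "1 \<notin> S" "2 \<notin> S" using avc False unfolding avoids12_def by auto
    from count_lemma[OF f(1) this assms(1)]
    have "(\<Sum>i\<in>{2..n}. if pp i \<inter> S = {} then 1 else 0) - (\<Sum>j\<in>{2..n}. if pp j \<subseteq> S then 1 else 0)
         = real n - 1 - real (card S)" .
    moreover have "real (card S) = real k - 2" using f(2) by linarith
    ultimately show ?thesis using key_lemma[OF hc avc Lc, of S] by (simp add: Lop_def)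
  qed
  have pos: "real n - real k + 1 > 0" using assms(2) by simp
  have L4: "Lam n \<beta>4 = (\<lambda>_. 0)"
  proof
    fix S
    have L0: "Lam n (restr \<mu> {}) S = - c S" using restr_Lam[OF assms(1) _ pr, of "{}"] by (simp add: c_def)
    have "Lam n \<beta>4 S = - c S + (- s) * ((real n - real k + 1) * c S)"
      unfolding \<beta>4_def Lam_add Lam_scale unfolding mv_add_def mv_scale_def L0 LLc ..
    also have "\<dots> = 0" using pos by (simp add: s_def)
    finally show "Lam n \<beta>4 S = 0" .
  qed
  have h4: "homog n (int k) \<beta>4"
    unfolding homog_def
  proof (intro allI impI)
    fix S assume "\<beta>4 S \<noteq> 0"
    then have "restr \<mu> {} S \<noteq> 0 \<or> Lop n c S \<noteq> 0" by (auto simp: \<beta>4_def mv_add_def mv_scale_def)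
    then show "S \<subseteq> {1..2*n} \<and> int (card S) = int k"
      using h0 Lop_homog[OF hc] unfolding homog_def by fastforce
  qed
  have av4: "avoids12 \<beta>4"
    unfolding avoids12_def
  proof (intro allI impI)
    fix S assume "\<beta>4 S \<noteq> 0"
    then have "restr \<mu> {} S \<noteq> 0 \<or> Lop n c S \<noteq> 0" by (auto simp: \<beta>4_def mv_add_def mv_scale_def)
    then show "1 \<notin> S \<and> 2 \<notin> S"
      using restr_avoids[of \<mu> "{}"] Lop_avoids[OF avc, of n] unfolding avoids12_def by blast
  qed
  have dec: "\<mu> = mv_add (wedge (ebasis {1}) (restr \<mu> {1}))
                 (mv_add (wedge (ebasis {2}) (restr \<mu> {2}))
                   (mv_add (wedge (mv_add (ebasis {1, 2}) (mv_scale s Om)) c) \<beta>4))"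
  proof
    fix U
    have "\<mu> U = wedge (ebasis {1}) (restr \<mu> {1}) U + wedge (ebasis {2}) (restr \<mu> {2}) U
              + wedge (ebasis {1,2}) (restr \<mu> {1,2}) U + restr \<mu> {} U"
    proof -
      have t1: "wedge (ebasis {1}) (restr \<mu> {1}) U = (if {1} \<subseteq> U \<and> (1 \<in> U \<longleftrightarrow> 1 \<in> {1::nat}) \<and> (2 \<in> U \<longleftrightarrow> 2 \<in> {1::nat}) then \<mu> U else 0)"
        by (rule term_eq[OF h]) auto
      have t2: "wedge (ebasis {2}) (restr \<mu> {2}) U = (if {2} \<subseteq> U \<and> (1 \<in> U \<longleftrightarrow> 1 \<in> {2::nat}) \<and> (2 \<in> U \<longleftrightarrow> 2 \<in> {2::nat}) then \<mu> U else 0)"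
        by (rule term_eq[OF h]) auto
      have t3: "wedge (ebasis {1,2}) (restr \<mu> {1,2}) U = (if {1,2} \<subseteq> U \<and> (1 \<in> U \<longleftrightarrow> 1 \<in> {1,2::nat}) \<and> (2 \<in> U \<longleftrightarrow> 2 \<in> {1,2::nat}) then \<mu> U else 0)"
        by (rule term_eq[OF h]) auto
      have t0: "restr \<mu> {} U = (if 1 \<in> U \<or> 2 \<in> U then 0 else \<mu> U)" by (simp add: restr_def)
      show ?thesis unfolding t0 t1 t2 t3 by (cases "1 \<in> U"; cases "2 \<in> U") auto
    qed
    then show "\<mu> U = mv_add (wedge (ebasis {1}) (restr \<mu> {1}))
                 (mv_add (wedge (ebasis {2}) (restr \<mu> {2}))
                   (mv_add (wedge (mv_add (ebasis {1, 2}) (mv_scale s Om)) c) \<beta>4)) U"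
      unfolding wedge_add1 wedge_scale1 wOm by (simp add: mv_add_def mv_scale_def \<beta>4_def c_def algebra_simps)
  qed
  show ?thesis
    apply (rule exI[of _ "restr \<mu> {1}"], rule exI[of _ "restr \<mu> {2}"], rule exI[of _ c], rule exI[of _ \<beta>4])
    using dec h1 h2 hc h4 L4 Lc avc av4
      restr_Lam[OF assms(1) _ pr, of "{1}"] restr_Lam[OF assms(1) _ pr, of "{2}"]
    by (simp add: primitive_def restr_avoids fun_eq_iff s_def Om_def)
qed

end
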